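(* Let $T>0$ and let $\alpha,\beta:\mathbb{R}\to\mathbb{R}$ be continuous $T$-periodic functions such that $\alpha=0$ on $[\tfrac T2,T]$, $\beta=0$ on $[0,\tfrac T2]$, $\alpha>0$ on $(0,\tfrac T2)$, $\beta>0$ on $(\tfrac T2,T)$, and $\int_0^T\alpha=\int_0^T\beta=:A>0$. For $x\in\mathbb{R}$ define $E_0(x):=1$, $E_1(x):=e^{(1-x)A}$ and, for $n\ge2$, \[ E_n(x):=\begin{cases} \exp\!\Big(\big[x(E_1(x)+E_3(x)+\cdots+E_{n-1}(x))-\tfrac n2\big]A\Big), & n \text{ even},\\[4pt] \exp\!\Big(\big[\tfrac{n+1}{2}-x(E_0(x)+E_2(x)+\cdots+E_{n-1}(x))\big]A\Big), & n\text{ odd}.\end{cases} \] Then for every integer $n\ge1$ and every $x>0$, \[ \mathcal{P}_n(x,x)=\big(xE_{2n-1}(x),\,xE_{2n}(x)\big). \]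
   Context: $\mathcal{P}_n(u_0,v_0):=(u(nT),v(nT))$, where $(u,v)$ is the solution of $u'=\alpha(t)u(1-v)$, $v'=\beta(t)v(-1+u)$ with $(u(0),v(0))=(u_0,v_0)$ (the $nT$-time Poincaré map). *)

theory Defs
  imports "HOL-Analysis.Analysis"
begin

text \<open>For even n \<ge> 2 the sum runs over the odd indices 1,3,...,n-1 (written 2k+1, k < n div 2);
  for odd n \<ge> 3 it runs over the even indices 0,2,...,n-1 (written 2k, k < (n+1) div 2).\<close>

function E :: "real \<Rightarrow> real \<Rightarrow> nat \<Rightarrow> real" where
  "E A x n =
     (if n = 0 then 1
      else if n = 1 then exp ((1 - x) * A)
      else if even n then
        exp ((x * (\<Sum>k<n div 2. E A x (2 * k + 1)) - real n / 2) * A)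
      else
        exp ((real (n + 1) / 2 - x * (\<Sum>k<(n + 1) div 2. E A x (2 * k))) * A))"
  by pat_completeness auto
termination
  by (relation "Wellfounded.measure (\<lambda>(A, x, n). n)") (auto elim!: oddE)

definition is_LV_solution ::
  "(real \<Rightarrow> real) \<Rightarrow> (real \<Rightarrow> real) \<Rightarrow> real \<Rightarrow> real \<times> real \<Rightarrow> (real \<Rightarrow> real \<times> real) \<Rightarrow> bool"
where
  "is_LV_solution \<alpha> \<beta> t1 p0 w \<longleftrightarrow>
     w 0 = p0 \<and>
     (\<forall>t\<in>{0..t1}. (w has_vector_derivative
        (\<alpha> t * fst (w t) * (1 - snd (w t)), \<beta> t * snd (w t) * (-1 + fst (w t))))
        (at t within {0..t1}))"

end

theory Submission
  imports Defs
begin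

lemma vd_fst: "(w has_vector_derivative D) F \<Longrightarrow> ((\<lambda>t. fst (w t)) has_vector_derivative fst D) F"
  unfolding has_vector_derivative_def by (drule has_derivative_fst) simp

lemma vd_snd: "(w has_vector_derivative D) F \<Longrightarrow> ((\<lambda>t. snd (w t)) has_vector_derivative snd D) F"
  unfolding has_vector_derivative_def by (drule has_derivative_snd) simp

lemma exp_aux: "(X::real) * exp (- (k * z)) = Y \<Longrightarrow> X = Y * exp (k * z)"
  by (metis exp_minus_inverse mult.assoc mult.commute mult_1 exp_minus mult_minus_left)

lemma half_u:
  fixes w :: "real \<Rightarrow> real \<times> real"
  assumes ab: "a \<le> b" and ca: "continuous_on {a..b} \<alpha>"
    and b0: "\<And>t. t \<in> {a..b} \<Longrightarrow> \<beta> t = 0"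
    and d: "\<And>t. t \<in> {a..b} \<Longrightarrow> (w has_vector_derivative
        (\<alpha> t * fst (w t) * (1 - snd (w t)), \<beta> t * snd (w t) * (-1 + fst (w t)))) (at t within {a..b})"
  shows "w b = (fst (w a) * exp ((1 - snd (w a)) * integral {a..b} \<alpha>), snd (w a))"
proof -
  have "\<And>t. t \<in> {a..b} \<Longrightarrow> ((\<lambda>t. snd (w t)) has_vector_derivative 0) (at t within {a..b})"
    using vd_snd[OF d] b0 by force
  then obtain c where c: "\<And>t. t \<in> {a..b} \<Longrightarrow> snd (w t) = c"
    by (metis convex_box(1) interval_cbox has_vector_derivative_zero_constant)
  define g where "g t = fst (w t) * exp (- (1 - c) * integral {a..t} \<alpha>)" for t
  have "(g has_vector_derivative 0) (at t within {a..b})" if t: "t \<in> {a..b}" for t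
  proof -
    have u: "((\<lambda>t. fst (w t)) has_real_derivative \<alpha> t * fst (w t) * (1 - c)) (at t within {a..b})"
      using vd_fst[OF d[OF t]] c[OF t] by (simp add: has_real_derivative_iff_has_vector_derivative)
    have i: "((\<lambda>u. integral {a..u} \<alpha>) has_real_derivative \<alpha> t) (at t within {a..b})"
      using integral_has_vector_derivative[OF ca t] by (simp add: has_real_derivative_iff_has_vector_derivative)
    have "(g has_real_derivative (\<alpha> t * fst (w t) * (1 - c) * exp (- (1 - c) * integral {a..t} \<alpha>) + exp (- (1 - c) * integral {a..t} \<alpha>) * (- (1 - c) * \<alpha> t) * fst (w t))) (at t within {a..b})"
      unfolding g_def apply (intro derivative_eq_intros) apply (rule u) apply (rule refl) apply (rule i) apply (rule refl)+ by (simp add: algebra_simps)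
    moreover have "(\<alpha> t * fst (w t) * (1 - c) * exp (- (1 - c) * integral {a..t} \<alpha>) + exp (- (1 - c) * integral {a..t} \<alpha>) * (- (1 - c) * \<alpha> t) * fst (w t)) = 0" by (simp add: algebra_simps)
    ultimately show ?thesis by (simp add: has_real_derivative_iff_has_vector_derivative)
  qed
  then obtain k where k: "\<And>t. t \<in> {a..b} \<Longrightarrow> g t = k"
    by (metis convex_box(1) interval_cbox has_vector_derivative_zero_constant)
  have "g b = g a" using k ab by simp
  then have "fst (w b) = fst (w a) * exp ((1 - c) * integral {a..b} \<alpha>)"
    unfolding g_def by (intro exp_aux) (simp add: algebra_simps)
  moreover have "snd (w b) = snd (w a)" using c ab by simp
  ultimately show ?thesis using c ab by (metis atLeastAtMost_iff order_refl prod.collapse)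
qed

lemma half_v:
  fixes w :: "real \<Rightarrow> real \<times> real"
  assumes ab: "a \<le> b" and ca: "continuous_on {a..b} \<beta>"
    and b0: "\<And>t. t \<in> {a..b} \<Longrightarrow> \<alpha> t = 0"
    and d: "\<And>t. t \<in> {a..b} \<Longrightarrow> (w has_vector_derivative
        (\<alpha> t * fst (w t) * (1 - snd (w t)), \<beta> t * snd (w t) * (-1 + fst (w t)))) (at t within {a..b})"
  shows "w b = (fst (w a), snd (w a) * exp ((fst (w a) - 1) * integral {a..b} \<beta>))"
proof -
  have "\<And>t. t \<in> {a..b} \<Longrightarrow> ((\<lambda>t. fst (w t)) has_vector_derivative 0) (at t within {a..b})"
    using vd_fst[OF d] b0 by force
  then obtain c where c: "\<And>t. t \<in> {a..b} \<Longrightarrow> fst (w t) = c"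
    by (metis convex_box(1) interval_cbox has_vector_derivative_zero_constant)
  define g where "g t = snd (w t) * exp (- (c - 1) * integral {a..t} \<beta>)" for t
  have "(g has_vector_derivative 0) (at t within {a..b})" if t: "t \<in> {a..b}" for t
  proof -
    have u: "((\<lambda>t. snd (w t)) has_real_derivative \<beta> t * snd (w t) * (c - 1)) (at t within {a..b})"
      using vd_snd[OF d[OF t]] c[OF t] by (simp add: has_real_derivative_iff_has_vector_derivative)
    have i: "((\<lambda>u. integral {a..u} \<beta>) has_real_derivative \<beta> t) (at t within {a..b})"
      using integral_has_vector_derivative[OF ca t] by (simp add: has_real_derivative_iff_has_vector_derivative)
    have "(g has_real_derivative (\<beta> t * snd (w t) * (c - 1)) * exp (- (c - 1) * integral {a..t} \<beta>)
       + snd (w t) * (exp (- (c - 1) * integral {a..t} \<beta>) * (- (c - 1) * \<beta> t))) (at t within {a..b})"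
      unfolding g_def apply (intro derivative_eq_intros) apply (rule u) apply (rule refl) apply (rule i) apply (rule refl)+ by (simp add: algebra_simps)
    then show ?thesis by (simp add: has_real_derivative_iff_has_vector_derivative algebra_simps)
  qed
  then obtain k where k: "\<And>t. t \<in> {a..b} \<Longrightarrow> g t = k"
    by (metis convex_box(1) interval_cbox has_vector_derivative_zero_constant)
  have "g b = g a" using k ab by simp
  then have "snd (w b) = snd (w a) * exp ((c - 1) * integral {a..b} \<beta>)"
    unfolding g_def by (intro exp_aux) (simp add: algebra_simps)
  moreover have "fst (w b) = fst (w a)" using c ab by simp
  ultimately show ?thesis using c ab by (metis atLeastAtMost_iff order_refl prod.collapse)
qed


lemma E0: "E a x 0 = 1" by (subst E.simps) simp

lemma Eodd_closed: "E a x (2*n+1) = exp ((real n + 1 - x * (\<Sum>k<n+1. E a x (2*k))) * a)"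
proof (cases "n = 0")
  case True then show ?thesis by (subst E.simps) (simp add: E0)
next
  case False
  have "(2*n+1+1) div 2 = n+1" by simp
  moreover have "real (2*n+1+1) / 2 = real n + 1" by simp
  ultimately show ?thesis using False by (subst E.simps) simp
qed

lemma Eeven_closed: "E a x (2*n+2) = exp ((x * (\<Sum>k<n+1. E a x (2*k+1)) - (real n + 1)) * a)"
proof -
  have "(2*n+2) div 2 = n+1" by simp
  moreover have "real (2*n+2) / 2 = real n + 1" by simp
  ultimately show ?thesis by (subst E.simps) (simp add: field_simps)
qed

lemma Eodd_rec: "E a x (2*n+3) = E a x (2*n+1) * exp ((1 - x * E a x (2*n+2)) * a)"
proof -
  have "E a x (2*(n+1)+1) = exp ((real (n+1) + 1 - x * (\<Sum>k<n+2. E a x (2*k))) * a)"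
    using Eodd_closed[of a x "n+1"] by simp
  also have "\<dots> = E a x (2*n+1) * exp ((1 - x * E a x (2*n+2)) * a)"
    unfolding Eodd_closed by (simp add: exp_add[symmetric] algebra_simps)
  finally show ?thesis by (simp add: numeral_eq_Suc)
qed

lemma Eeven_rec: "E a x (2*n+2) = E a x (2*n) * exp ((x * E a x (2*n+1) - 1) * a)"
proof (cases n)
  case 0 then show ?thesis using Eeven_closed[of a x 0] by (simp add: E0)
next
  case (Suc m)
  have "E a x (2*(m+1)+2) = exp ((x * (\<Sum>k<m+2. E a x (2*k+1)) - (real (m+1) + 1)) * a)"
    using Eeven_closed[of a x "m+1"] by simp
  also have "\<dots> = E a x (2*m+2) * exp ((x * E a x (2*m+3) - 1) * a)"
    unfolding Eeven_closed by (simp add: exp_add[symmetric] algebra_simps numeral_eq_Suc)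
  finally show ?thesis using Suc by (simp add: numeral_eq_Suc algebra_simps)
qed

fun st :: "real \<Rightarrow> real \<Rightarrow> nat \<Rightarrow> real \<times> real" where
  "st a x 0 = (x, x)"
| "st a x (Suc m) = (if even m then (fst (st a x m) * exp ((1 - snd (st a x m)) * a), snd (st a x m))
     else (fst (st a x m), snd (st a x m) * exp ((fst (st a x m) - 1) * a)))"

lemma st_E: "st a x (2*n+1) = (x * E a x (2*n+1), x * E a x (2*n)) \<and>
             st a x (2*n+2) = (x * E a x (2*n+1), x * E a x (2*n+2))"
proof (induction n)
  case 0
  have "E a x 1 = exp ((1 - x) * a)" by (subst E.simps) simp
  moreover have "E a x 2 = exp ((x * E a x 1 - 1) * a)" using Eeven_closed[of a x 0] by simp
  ultimately show ?case by (simp add: E0 numeral_eq_Suc)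
next
  case (Suc n)
  have s1: "st a x (2*Suc n+1) = st a x (Suc (2*n+2))" by simp
  have s2: "st a x (2*Suc n+2) = st a x (Suc (Suc (2*n+2)))" by simp
  have e1: "E a x (2*Suc n+1) = E a x (2*n+1) * exp ((1 - x * E a x (2*n+2)) * a)"
    using Eodd_rec[of a x n] by (simp add: numeral_eq_Suc)
  have e2: "E a x (2*Suc n+2) = E a x (2*n+2) * exp ((x * E a x (2*n+3) - 1) * a)"
    using Eeven_rec[of a x "n+1"] by (simp add: numeral_eq_Suc)
  have e3: "E a x (2*n+3) = E a x (2*Suc n+1)" by (simp add: numeral_eq_Suc)
  show ?case unfolding s1 s2 using Suc.IH e1 e2 e3
    by (simp only: st.simps) (simp add: mult.assoc)
qed


lemma piece_u:
  fixes \<alpha> \<beta> :: "real \<Rightarrow> real"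
  assumes ca: "continuous_on {a..b} \<alpha>" and b0: "\<And>t. t \<in> {a..b} \<Longrightarrow> \<beta> t = 0"
    and t: "t \<in> {a..b}"
  shows "((\<lambda>t. (u0 * exp ((1 - v0) * integral {a..t} \<alpha>), v0)) has_vector_derivative
     (\<alpha> t * (u0 * exp ((1 - v0) * integral {a..t} \<alpha>)) * (1 - v0), \<beta> t * v0 * (-1 + u0 * exp ((1 - v0) * integral {a..t} \<alpha>))))
     (at t within {a..b})"
proof -
  have i: "((\<lambda>u. integral {a..u} \<alpha>) has_real_derivative \<alpha> t) (at t within {a..b})"
    using integral_has_vector_derivative[OF ca t] by (simp add: has_real_derivative_iff_has_vector_derivative)
  have "((\<lambda>t. u0 * exp ((1 - v0) * integral {a..t} \<alpha>)) has_real_derivative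
      \<alpha> t * (u0 * exp ((1 - v0) * integral {a..t} \<alpha>)) * (1 - v0)) (at t within {a..b})"
    apply (intro derivative_eq_intros) apply (rule refl)+ apply (rule i) apply (rule refl)+
    by (simp add: algebra_simps)
  then show ?thesis using b0[OF t]
    by (auto intro!: has_vector_derivative_Pair simp: has_real_derivative_iff_has_vector_derivative)
qed

lemma piece_v:
  fixes \<alpha> \<beta> :: "real \<Rightarrow> real"
  assumes ca: "continuous_on {a..b} \<beta>" and b0: "\<And>t. t \<in> {a..b} \<Longrightarrow> \<alpha> t = 0"
    and t: "t \<in> {a..b}"
  shows "((\<lambda>t. (u0, v0 * exp ((u0 - 1) * integral {a..t} \<beta>))) has_vector_derivative
     (\<alpha> t * u0 * (1 - v0 * exp ((u0 - 1) * integral {a..t} \<beta>)), \<beta> t * (v0 * exp ((u0 - 1) * integral {a..t} \<beta>)) * (-1 + u0)))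
     (at t within {a..b})"
proof -
  have i: "((\<lambda>u. integral {a..u} \<beta>) has_real_derivative \<beta> t) (at t within {a..b})"
    using integral_has_vector_derivative[OF ca t] by (simp add: has_real_derivative_iff_has_vector_derivative)
  have "((\<lambda>t. v0 * exp ((u0 - 1) * integral {a..t} \<beta>)) has_real_derivative
      \<beta> t * (v0 * exp ((u0 - 1) * integral {a..t} \<beta>)) * (-1 + u0)) (at t within {a..b})"
    apply (intro derivative_eq_intros) apply (rule refl)+ apply (rule i) apply (rule refl)+
    by (simp add: algebra_simps)
  then show ?thesis using b0[OF t]
    by (auto intro!: has_vector_derivative_Pair simp: has_real_derivative_iff_has_vector_derivative)
qed

lemma glue:
  fixes F :: "real \<Rightarrow> real \<times> real \<Rightarrow> real \<times> real"
  assumes "0 \<le> a" "a \<le> b"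
    and w: "\<And>t. t \<in> {0..a} \<Longrightarrow> (w has_vector_derivative F t (w t)) (at t within {0..a})"
    and p: "\<And>t. t \<in> {a..b} \<Longrightarrow> (p has_vector_derivative F t (p t)) (at t within {a..b})"
    and eq: "w a = p a" and t: "t \<in> {0..b}"
  shows "((\<lambda>t. if t \<in> {0..a} then w t else p t) has_vector_derivative
           F t (if t \<in> {0..a} then w t else p t)) (at t within {0..b})"
proof -
  have cl: "closure {0..a} \<inter> closure {a..b} = {a}" using assms(1,2) by auto
  have "((\<lambda>t. if t \<in> {0..a} then w t else p t) has_vector_derivative
           (if t \<in> {0..a} then F t (w t) else F t (p t))) (at t within {0..b})"
    apply (rule has_vector_derivative_If_within_closures[where S="{0..a}" and T="{a..b}"])
    using assms cl by (auto simp: insert_absorb)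
  then show ?thesis by (simp add: if_distrib)
qed

theorem proposition3p2:
  fixes T :: real and \<alpha> \<beta> :: "real \<Rightarrow> real" and n :: nat and x :: real
  assumes "T > 0"
    and "continuous_on UNIV \<alpha>" and "continuous_on UNIV \<beta>"
    and "\<And>t. \<alpha> (t + T) = \<alpha> t" and "\<And>t. \<beta> (t + T) = \<beta> t"
    and "\<And>t. t \<in> {T/2..T} \<Longrightarrow> \<alpha> t = 0"
    and "\<And>t. t \<in> {0..T/2} \<Longrightarrow> \<beta> t = 0"
    and "\<And>t. t \<in> {0<..<T/2} \<Longrightarrow> \<alpha> t > 0"
    and "\<And>t. t \<in> {T/2<..<T} \<Longrightarrow> \<beta> t > 0"
    and "integral {0..T} \<alpha> = integral {0..T} \<beta>"
    and "integral {0..T} \<alpha> > 0"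
    and "n \<ge> 1" and "x > 0"
  shows "(\<exists>w. is_LV_solution \<alpha> \<beta> (real n * T) (x, x) w) \<and>
         (\<forall>w. is_LV_solution \<alpha> \<beta> (real n * T) (x, x) w \<longrightarrow>
              w (real n * T) = (x * E (integral {0..T} \<alpha>) x (2 * n - 1),
                                x * E (integral {0..T} \<alpha>) x (2 * n)))"
proof -
  let ?A = "integral {0..T} \<alpha>"
  define h where "h = T / 2"
  define F where "F t z = (\<alpha> t * fst z * (1 - snd z), \<beta> t * snd z * (-1 + fst z))" for t z
  have hpos: "h > 0" using assms(1) unfolding h_def by simp
  have perA: "\<alpha> (t + real k * T) = \<alpha> t" for k t
  proof (induction k)
    case (Suc k)
    have "\<alpha> (t + real (Suc k) * T) = \<alpha> ((t + real k * T) + T)" by (simp add: algebra_simps)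
    then show ?case using assms(4) Suc by simp
  qed simp
  have perB: "\<beta> (t + real k * T) = \<beta> t" for k t
  proof (induction k)
    case (Suc k)
    have "\<beta> (t + real (Suc k) * T) = \<beta> ((t + real k * T) + T)" by (simp add: algebra_simps)
    then show ?case using assms(5) Suc by simp
  qed simp
  have zeroB: "\<beta> t = 0" if ev: "even m" and tm: "t \<in> {real m * h .. real (Suc m) * h}" for m t
  proof -
    obtain k where k: "m = 2 * k" using ev by blast
    have "t - real k * T \<in> {0..T/2}" using tm k unfolding h_def by (auto simp: algebra_simps)
    then have "\<beta> (t - real k * T) = 0" using assms(7) by blast
    then show ?thesis using perB[of "t - real k * T" k] by simp
  qed
  have zeroA: "\<alpha> t = 0" if ev: "odd m" and tm: "t \<in> {real m * h .. real (Suc m) * h}" for m t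
  proof -
    obtain k where k: "m = 2 * k + 1" using ev oddE by blast
    have "t - real k * T \<in> {T/2..T}" using tm k unfolding h_def by (auto simp: algebra_simps)
    then have "\<alpha> (t - real k * T) = 0" using assms(6) by blast
    then show ?thesis using perA[of "t - real k * T" k] by simp
  qed
  have cA: "continuous_on S \<alpha>" for S using continuous_on_subset[OF assms(2)] by blast
  have cB: "continuous_on S \<beta>" for S using continuous_on_subset[OF assms(3)] by blast
  have intA0: "integral {0..h} \<alpha> = ?A"
  proof -
    have "integral {h..T} \<alpha> = integral {h..T} (\<lambda>_. 0::real)"
      by (rule integral_cong) (use assms(6) in \<open>auto simp: h_def\<close>)
    then have "integral {h..T} \<alpha> = 0" by simp
    moreover have "integral {0..h} \<alpha> + integral {h..T} \<alpha> = ?A"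
      by (rule Henstock_Kurzweil_Integration.integral_combine) (use hpos in \<open>auto simp: h_def intro!: integrable_continuous_interval cA\<close>)
    ultimately show ?thesis by simp
  qed
  have intB0: "integral {h..T} \<beta> = ?A"
  proof -
    have "integral {0..h} \<beta> = integral {0..h} (\<lambda>_. 0::real)"
      by (rule integral_cong) (use assms(7) in \<open>auto simp: h_def\<close>)
    then have "integral {0..h} \<beta> = 0" by simp
    moreover have "integral {0..h} \<beta> + integral {h..T} \<beta> = integral {0..T} \<beta>"
      by (rule Henstock_Kurzweil_Integration.integral_combine) (use hpos in \<open>auto simp: h_def intro!: integrable_continuous_interval cB\<close>)
    ultimately show ?thesis using assms(10) by simp
  qed
  have intA: "integral {real m * h .. real (Suc m) * h} \<alpha> = ?A" if ev: "even m" for m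
  proof -
    obtain k where k: "m = 2 * k" using ev by blast
    have "\<alpha> \<circ> (+) (real k * T) = \<alpha>" using perA by (auto simp: add.commute)
    then have "integral {0 + real k * T .. h + real k * T} \<alpha> = integral {0..h} \<alpha>"
      using integral_shift_Icc_real[of 0 h \<alpha> "real k * T"] by simp
    moreover have "real m * h = 0 + real k * T" "real (Suc m) * h = h + real k * T"
      using k unfolding h_def by (auto simp: algebra_simps)
    ultimately show ?thesis using intA0 by metis
  qed
  have intB: "integral {real m * h .. real (Suc m) * h} \<beta> = ?A" if ev: "odd m" for m
  proof -
    obtain k where k: "m = 2 * k + 1" using ev oddE by blast
    have "\<beta> \<circ> (+) (real k * T) = \<beta>" using perB by (auto simp: add.commute)
    then have "integral {h + real k * T .. T + real k * T} \<beta> = integral {h..T} \<beta>"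
      using integral_shift_Icc_real[of h T \<beta> "real k * T"] by simp
    moreover have "real m * h = h + real k * T" "real (Suc m) * h = T + real k * T"
      using k unfolding h_def by (auto simp: algebra_simps)
    ultimately show ?thesis using intB0 by metis
  qed
  have nT: "real (2 * n) * h = real n * T" unfolding h_def by simp
  have ex: "\<exists>w. w 0 = (x, x) \<and> (\<forall>t\<in>{0..real m * h}.
      (w has_vector_derivative F t (w t)) (at t within {0..real m * h}))" for m
  proof (induction m)
    case 0
    show ?case
      by (rule exI[of _ "\<lambda>_. (x, x)"])
        (auto simp: has_vector_derivative_def has_derivative_within_singleton_iff bounded_linear_scaleR_left)
  next
    case (Suc m)
    then obtain w where w0: "w 0 = (x, x)" and wd: "\<And>t. t \<in> {0..real m * h} \<Longrightarrow>
      (w has_vector_derivative F t (w t)) (at t within {0..real m * h})" by blast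
    define a where "a = real m * h"
    define b where "b = real (Suc m) * h"
    have ab: "0 \<le> a" "a \<le> b" using hpos unfolding a_def b_def by (auto simp: algebra_simps)
    obtain p where pa: "p a = w a" and pd: "\<And>t. t \<in> {a..b} \<Longrightarrow>
      (p has_vector_derivative F t (p t)) (at t within {a..b})"
    proof (cases "even m")
      case True
      let ?p = "\<lambda>t. (fst (w a) * exp ((1 - snd (w a)) * integral {a..t} \<alpha>), snd (w a))"
      show ?thesis
      proof (rule that[of ?p])
        show "?p a = w a" by simp
        fix t assume "t \<in> {a..b}"
        then show "(?p has_vector_derivative F t (?p t)) (at t within {a..b})"
          using piece_u[of a b \<alpha> \<beta> t "fst (w a)" "snd (w a)"] zeroB[OF True] cA
          unfolding F_def a_def b_def by simp
      qed
    next
      case False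
      let ?p = "\<lambda>t. (fst (w a), snd (w a) * exp ((fst (w a) - 1) * integral {a..t} \<beta>))"
      show ?thesis
      proof (rule that[of ?p])
        show "?p a = w a" by simp
        fix t assume "t \<in> {a..b}"
        then show "(?p has_vector_derivative F t (?p t)) (at t within {a..b})"
          using piece_v[of a b \<beta> \<alpha> t "fst (w a)" "snd (w a)"] zeroA[OF False] cB
          unfolding F_def a_def b_def by simp
      qed
    qed
    show ?case
    proof (rule exI[of _ "\<lambda>t. if t \<in> {0..a} then w t else p t"], intro conjI ballI)
      show "(if (0::real) \<in> {0..a} then w 0 else p 0) = (x, x)" using w0 ab by simp
      fix t assume "t \<in> {0..real (Suc m) * h}"
      then show "((\<lambda>t. if t \<in> {0..a} then w t else p t) has_vector_derivative
          F t (if t \<in> {0..a} then w t else p t)) (at t within {0..real (Suc m) * h})"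
        using glue[of a b w F p t, OF ab] wd pd pa unfolding a_def b_def by auto
    qed
  qed
  show ?thesis
  proof
    show "\<exists>w. is_LV_solution \<alpha> \<beta> (real n * T) (x, x) w"
      using ex[of "2 * n"] unfolding is_LV_solution_def nT F_def by auto
  next
    show "\<forall>w. is_LV_solution \<alpha> \<beta> (real n * T) (x, x) w \<longrightarrow>
              w (real n * T) = (x * E ?A x (2 * n - 1), x * E ?A x (2 * n))"
    proof (intro allI impI)
      fix w assume sol: "is_LV_solution \<alpha> \<beta> (real n * T) (x, x) w"
      have w0: "w 0 = (x, x)" using sol unfolding is_LV_solution_def by simp
      have wd: "\<And>t. t \<in> {0..real n * T} \<Longrightarrow> (w has_vector_derivative F t (w t)) (at t within {0..real n * T})"
        using sol unfolding is_LV_solution_def F_def by simp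
      have main: "m \<le> 2 * n \<Longrightarrow> w (real m * h) = st ?A x m" for m
      proof (induction m)
        case 0 then show ?case using w0 by simp
      next
        case (Suc m)
        have IH: "w (real m * h) = st ?A x m" using Suc by simp
        have sub: "{real m * h .. real (Suc m) * h} \<subseteq> {0..real n * T}"
        proof -
          have "real (Suc m) * h \<le> real (2 * n) * h"
            using Suc.prems hpos by (intro mult_right_mono) auto
          then show ?thesis using nT hpos by auto
        qed
        have d: "\<And>t. t \<in> {real m * h .. real (Suc m) * h} \<Longrightarrow> (w has_vector_derivative
            (\<alpha> t * fst (w t) * (1 - snd (w t)), \<beta> t * snd (w t) * (-1 + fst (w t))))
            (at t within {real m * h .. real (Suc m) * h})"
          using wd sub unfolding F_def by (meson has_vector_derivative_within_subset subsetD)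
        have le: "real m * h \<le> real (Suc m) * h" using hpos by simp
        show ?case
        proof (cases "even m")
          case True
          show ?thesis using half_u[OF le cA zeroB[OF True] d] intA[OF True] IH True by simp
        next
          case False
          show ?thesis using half_v[OF le cB zeroA[OF False] d] intB[OF False] IH False by simp
        qed
      qed
      obtain n' where n': "n = Suc n'" using assms(12) by (cases n) auto
      have "w (real n * T) = st ?A x (2 * n' + 2)" using main[of "2 * n"] nT n' by simp
      also have "\<dots> = (x * E ?A x (2 * n' + 1), x * E ?A x (2 * n' + 2))"
        by (rule conjunct2[OF st_E])
      finally have fin: "w (real n * T) = (x * E ?A x (2 * n' + 1), x * E ?A x (2 * n' + 2))" .
      have e: "2 * n' + 1 = 2 * n - 1" "2 * n' + 2 = 2 * n" using n' by auto
      show "w (real n * T) = (x * E ?A x (2 * n - 1), x * E ?A x (2 * n))"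
        using fin by (simp only: e)
    qed
  qed
qed

end
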